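(* Let $n\geq 3$ and let $l_1,\dots,l_m$ be positive integers. Let $C=C_n(l_1,\dots,l_m)$ be any graph obtained from the cycle $C_n$ by attaching $m$ pendent paths of lengths $l_1,\dots,l_m$ at vertices of $C_n$, and let $SC=SC_n(l_1,\dots,l_m)$ be the graph obtained by attaching all $m$ of these pendent paths at a single vertex $c$ of $C_n$. Then for every integer $k\geq 0$, $$n_k(C)\leq n_k(SC),$$ and for every vertex $v$ on the cycle of $C$, $$n_k(v,C)\leq n_k(c,SC).$$
   Context: A pendent path of length $\ell$ attached at a vertex $w$ consists of $\ell$ new vertices $x_1,\dots,x_\ell$ and edges $wx_1,x_1x_2,\dots,x_{\ell-1}x_\ell$; several pendent paths may be attached at the same vertex. A subtree of a graph $G$ is a subgraph that is a tree (distinguished as subgraphs). $n_k(G)$ is the number of subtrees of $G$ with exactly $k$ vertices (with $n_0(G)=1$), and $n_k(v,G)$ is the number of those containing the vertex $v$. *)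

theory Defs
  imports Main
begin

text \<open>Simple graphs: a vertex set V and a set E of edges, each edge a 2-element set of vertices.\<close>

definition adj :: "'a set set \<Rightarrow> ('a \<times> 'a) set" where
  "adj F = {(x, y). {x, y} \<in> F}"

definition connected_sg :: "'a set \<Rightarrow> 'a set set \<Rightarrow> bool" where
  "connected_sg T F \<longleftrightarrow> (\<forall>x\<in>T. \<forall>y\<in>T. (x, y) \<in> (adj F)\<^sup>*)"

definition has_cycle :: "'a set \<Rightarrow> 'a set set \<Rightarrow> bool" where
  "has_cycle T F \<longleftrightarrow> (\<exists>vs. length vs \<ge> 3 \<and> distinct vs \<and> set vs \<subseteq> T \<and>
      (\<forall>i. Suc i < length vs \<longrightarrow> {vs ! i, vs ! Suc i} \<in> F) \<and> {last vs, hd vs} \<in> F)"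

definition is_subtree :: "'a set \<Rightarrow> 'a set set \<Rightarrow> 'a set \<Rightarrow> 'a set set \<Rightarrow> bool" where
  "is_subtree V E T F \<longleftrightarrow> T \<subseteq> V \<and> F \<subseteq> E \<and> (\<forall>e\<in>F. e \<subseteq> T) \<and> T \<noteq> {} \<and> finite T \<and>
     connected_sg T F \<and> \<not> has_cycle T F"

definition nk :: "'a set \<Rightarrow> 'a set set \<Rightarrow> nat \<Rightarrow> nat" where
  "nk V E k = (if k = 0 then 1 else card {(T, F). is_subtree V E T F \<and> card T = k})"

definition nkv :: "'a set \<Rightarrow> 'a set set \<Rightarrow> 'a \<Rightarrow> nat \<Rightarrow> nat" where
  "nkv V E v k = card {(T, F). is_subtree V E T F \<and> card T = k \<and> v \<in> T}"

text \<open>Vertex (0, i), i < n, is the i-th cycle vertex;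
  vertex (Suc j, t), 1 \<le> t \<le> ls!j, is the t-th vertex of the j-th pendent path,
  which is attached at cycle vertex (0, att j).\<close>
definition cp_verts :: "nat \<Rightarrow> nat list \<Rightarrow> (nat \<times> nat) set" where
  "cp_verts n ls = {(0, i) | i. i < n} \<union>
     {(Suc j, t) | j t. j < length ls \<and> 1 \<le> t \<and> t \<le> ls ! j}"

definition cp_edges :: "nat \<Rightarrow> nat list \<Rightarrow> (nat \<Rightarrow> nat) \<Rightarrow> (nat \<times> nat) set set" where
  "cp_edges n ls att =
     {{(0, i), (0, (i + 1) mod n)} | i. i < n} \<union>
     {{(0, att j), (Suc j, 1)} | j. j < length ls} \<union>
     {{(Suc j, t), (Suc j, Suc t)} | j t. j < length ls \<and> 1 \<le> t \<and> t < ls ! j}"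

end

theory Submission imports Defs begin

definition rot :: "nat \<Rightarrow> nat \<Rightarrow> nat \<times> nat \<Rightarrow> nat \<times> nat" where
 "rot n r x = (if fst x = 0 then (0, (snd x + n - r) mod n) else x)"
definition mixed :: "(nat \<times> nat) set \<Rightarrow> bool" where
 "mixed e \<longleftrightarrow> (\<exists>x\<in>e. fst x = 0) \<and> (\<exists>x\<in>e. fst x \<noteq> 0)"
definition psi :: "nat \<Rightarrow> nat \<Rightarrow> (nat \<times> nat) set \<Rightarrow> (nat \<times> nat) set" where
 "psi n r e = (if mixed e then insert (0,0) {x\<in>e. fst x \<noteq> 0} else rot n r ` e)"

lemma cut_lemma:
  assumes "(x,y) \<in> R\<^sup>*" "x \<in> U" "y \<notin> U"
  shows "\<exists>a b. (a,b) \<in> R \<and> a \<in> U \<and> b \<notin> U"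
  using assms
proof (induction rule: rtrancl_induct)
  case base thus ?case by simp
next
  case (step y z)
  show ?case
  proof (cases "y \<in> U")
    case True thus ?thesis using step by blast
  next
    case False thus ?thesis using step by blast
  qed
qed

lemma map_rtrancl:
  assumes "(x,y) \<in> R\<^sup>*" "\<And>a b. (a,b) \<in> R \<Longrightarrow> (f a, f b) \<in> S\<^sup>*"
  shows "(f x, f y) \<in> S\<^sup>*"
  using assms(1)
proof (induction rule: rtrancl_induct)
  case base thus ?case by simp
next
  case (step y z)
  thus ?case using assms(2) rtrancl_trans by metis
qed

lemma adj_iff: "(x,y) \<in> adj F \<longleftrightarrow> {x,y} \<in> F" by (simp add: adj_def)
lemma sym_adj: "sym (adj F)" by (auto simp: sym_def adj_def insert_commute)

lemma adj_rt_sym: "(x,y) \<in> (adj F)\<^sup>* \<Longrightarrow> (y,x) \<in> (adj F)\<^sup>*"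
  using sym_rtrancl[OF sym_adj] by (meson symD)

lemma cyc_nbrs:
  assumes "length vs \<ge> 3" "distinct vs" "\<forall>i. Suc i < length vs \<longrightarrow> {vs!i, vs!Suc i} \<in> F"
    "{last vs, hd vs} \<in> F" "x \<in> set vs"
  shows "\<exists>y z. y \<noteq> z \<and> y \<in> set vs \<and> z \<in> set vs \<and> {x,y} \<in> F \<and> {x,z} \<in> F"
proof -
  define L where "L = length vs"
  obtain i where i: "i < L" "x = vs!i" using assms(5) unfolding L_def in_set_conv_nth by blast
  have ne: "vs \<noteq> []" using assms(1) by auto
  have hd: "hd vs = vs!0" using ne by (simp add: hd_conv_nth)
  have last: "last vs = vs!(L-1)" using ne by (simp add: last_conv_nth L_def)
  define s where "s = (if Suc i < L then Suc i else 0)"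
  define p where "p = (if i = 0 then L - 1 else i - 1)"
  have sL: "s < L" "p < L" "s \<noteq> p" using i assms(1) unfolding s_def p_def L_def by auto
  have e1: "{x, vs!s} \<in> F"
  proof (cases "Suc i < L")
    case True thus ?thesis using assms(3) i unfolding s_def L_def by simp
  next
    case False
    hence "i = L - 1" using i by simp
    thus ?thesis using assms(4) i False hd last unfolding s_def by simp
  qed
  have e2: "{x, vs!p} \<in> F"
  proof (cases "i = 0")
    case True thus ?thesis using assms(4) i hd last unfolding p_def by (simp add: insert_commute)
  next
    case False
    hence a: "Suc (i-1) < L" "Suc (i - 1) = i" using i by simp_all
    have "{vs!(i-1), vs!Suc (i-1)} \<in> F" using assms(3) a(1) unfolding L_def by blast
    thus ?thesis using a(2) i False unfolding p_def by (simp add: insert_commute)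
  qed
  have "vs!s \<noteq> vs!p" using sL assms(2) by (simp add: nth_eq_iff_index_eq L_def)
  moreover have "vs!s \<in> set vs" "vs!p \<in> set vs" using sL by (simp_all add: L_def)
  ultimately show ?thesis using e1 e2 by blast
qed


lemma edge_iff: "e \<in> cp_edges n ls a \<longleftrightarrow> (\<exists>i<n. e = {(0,i),(0,(i+1) mod n)}) \<or>
   (\<exists>j<length ls. e = {(0,a j),(Suc j,1)}) \<or>
   (\<exists>j t. j<length ls \<and> 1\<le>t \<and> t<ls!j \<and> e = {(Suc j,t),(Suc j,Suc t)})"
  unfolding cp_edges_def by blast

lemma vert_iff: "(p,q) \<in> cp_verts n ls \<longleftrightarrow> (p = 0 \<and> q < n) \<or>
   (p \<noteq> 0 \<and> p - 1 < length ls \<and> 1 \<le> q \<and> q \<le> ls!(p-1))"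
  unfolding cp_verts_def by (cases p) auto

lemma rot_fst[simp]: "fst (rot n r x) = fst x" by (simp add: rot_def)
lemma rot_Suc[simp]: "rot n r (Suc j, t) = (Suc j, t)" by (simp add: rot_def)
lemma rot_zero: "rot n r (0, i) = (0, (i + n - r) mod n)" by (simp add: rot_def)
lemma rot_0r[simp]: "r < n \<Longrightarrow> rot n r (0, r) = (0, 0)" by (simp add: rot_def)

lemma rot_back: "(i::nat) < n \<Longrightarrow> r < n \<Longrightarrow> ((i + n - r) mod n + r) mod n = i"
proof -
  assume a: "i < n" "r < n"
  have "((i + n - r) mod n + r) mod n = ((i + n - r) + r) mod n" by (rule mod_add_left_eq)
  also have "(i + n - r) + r = i + n" using a by (intro le_add_diff_inverse2) simp
  finally show ?thesis using a by simp
qed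

lemma mixed_psi[simp]: "mixed (psi n r e) = mixed e"
proof (cases "mixed e")
  case True
  then obtain y where y: "y\<in>e" "fst y \<noteq> 0" by (auto simp: mixed_def)
  have "(0,0) \<in> psi n r e" using True by (simp add: psi_def)
  moreover have "y \<in> psi n r e" using True y by (simp add: psi_def)
  ultimately have "mixed (psi n r e)" using y unfolding mixed_def by force
  thus ?thesis using True by simp
next
  case False
  have h: "(\<exists>x\<in>rot n r ` e. P (fst x)) = (\<exists>x\<in>e. P (fst x))" for P by auto
  have "psi n r e = rot n r ` e" using False by (simp add: psi_def)
  moreover have "mixed (rot n r ` e) = mixed e" unfolding mixed_def
    using h[of "\<lambda>a. a = 0"] h[of "\<lambda>a. a \<noteq> 0"] by simp
  ultimately show ?thesis by simp
qed

lemma psi_nm: "\<not> mixed e \<Longrightarrow> psi n r e = rot n r ` e" by (simp add: psi_def)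

lemma psi_att[simp]: "psi n r {(0,b),(Suc j,1)} = {(0,0),(Suc j,1)}"
proof -
  have "mixed {(0,b),(Suc j,1)}" unfolding mixed_def by force
  moreover have "{x\<in>{(0::nat,b),(Suc j,1::nat)}. fst x \<noteq> 0} = {(Suc j,1)}" by auto
  ultimately show ?thesis by (simp add: psi_def)
qed

lemma psi_nz: "{x\<in>psi n r e. fst x \<noteq> 0} = {x\<in>e. fst x \<noteq> 0}"
proof (cases "mixed e")
  case True thus ?thesis by (auto simp: psi_def)
next
  case False
  have "x \<in> rot n r ` e \<and> fst x \<noteq> 0 \<longleftrightarrow> x \<in> e \<and> fst x \<noteq> 0" for x
  proof
    assume "x \<in> rot n r ` e \<and> fst x \<noteq> 0"
    then obtain y where y: "y \<in> e" "x = rot n r y" "fst x \<noteq> 0" by blast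
    hence "fst y \<noteq> 0" by simp
    hence "rot n r y = y" by (simp add: rot_def)
    thus "x \<in> e \<and> fst x \<noteq> 0" using y by simp
  next
    assume "x \<in> e \<and> fst x \<noteq> 0"
    thus "x \<in> rot n r ` e \<and> fst x \<noteq> 0" by (metis image_eqI rot_def)
  qed
  thus ?thesis using False by (auto simp: psi_def)
qed

lemma mixed_E: "e \<in> cp_edges n ls a \<Longrightarrow> mixed e \<Longrightarrow> \<exists>j<length ls. e = {(0,a j),(Suc j,1)}"
  unfolding edge_iff mixed_def by auto

lemma nbr_S: assumes "{(Suc j,t),y} \<in> cp_edges n ls (\<lambda>_. 0)"
  shows "y = (Suc j, Suc t) \<or> y = (if t = 1 then (0,0) else (Suc j, t - 1))"
proof -
  consider (c) i where "{(Suc j,t),y} = {(0,i),(0::nat,(i+1) mod n)}"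
    | (a) j' where "{(Suc j,t),y} = {(0,0),(Suc j',1)}"
    | (p) j' t' where "1\<le>t'" "{(Suc j,t),y} = {(Suc j',t'),(Suc j',Suc t')}"
    using assms unfolding edge_iff by blast
  thus ?thesis
  proof cases
    case c thus ?thesis by (simp add: doubleton_eq_iff)
  next
    case a thus ?thesis by (simp add: doubleton_eq_iff)
  next
    case p thus ?thesis by (auto simp add: doubleton_eq_iff)
  qed
qed

locale cpl =
  fixes n :: nat and ls :: "nat list" and att :: "nat \<Rightarrow> nat"
  assumes n3: "n \<ge> 3" and pos: "\<forall>l\<in>set ls. l > 0" and attn: "\<forall>j<length ls. att j < n"
begin

abbreviation "V \<equiv> cp_verts n ls"
abbreviation "EC \<equiv> cp_edges n ls att"
abbreviation "ES \<equiv> cp_edges n ls (\<lambda>_. 0)"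

lemma edge_sub_V: assumes "e \<in> cp_edges n ls a" "\<forall>j<length ls. a j < n" shows "e \<subseteq> V"
proof -
  have l1: "\<forall>j<length ls. ls!j \<ge> 1" using pos by (auto simp: Suc_le_eq)
  consider (c) i where "i < n" "e = {(0,i),(0,(i+1) mod n)}"
    | (a) j where "j < length ls" "e = {(0,a j),(Suc j,1)}"
    | (p) j t where "j<length ls" "1\<le>t" "t<ls!j" "e = {(Suc j,t),(Suc j,Suc t)}"
    using assms(1) unfolding edge_iff by blast
  thus ?thesis
  proof cases
    case c thus ?thesis using n3 by (simp add: vert_iff)
  next
    case a thus ?thesis using l1 assms(2) by (simp add: vert_iff)
  next
    case p thus ?thesis by (simp add: vert_iff)
  qed
qed

lemma rot_V: assumes "x \<in> V" shows "rot n r x \<in> V"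
proof -
  obtain p q where x: "x = (p,q)" by (cases x)
  show ?thesis
  proof (cases "p = 0")
    case True
    have "(q + n - r) mod n < n" using n3 by simp
    thus ?thesis using True x by (simp add: rot_zero vert_iff)
  next
    case False
    hence "rot n r x = x" using x by (simp add: rot_def)
    thus ?thesis using assms by simp
  qed
qed

lemma rot_inj: assumes "r < n" shows "inj_on (rot n r) V"
proof (rule inj_onI)
  fix x y assume x: "x \<in> V" and y: "y \<in> V" and e: "rot n r x = rot n r y"
  obtain p q where xp: "x = (p,q)" by (cases x)
  obtain p' q' where yp: "y = (p',q')" by (cases y)
  have pp: "p = p'" using arg_cong[OF e, of fst] xp yp by simp
  show "x = y"
  proof (cases "p = 0")
    case True
    have qn: "q < n" "q' < n" using x y xp yp True pp by (simp_all add: vert_iff)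
    have x0: "x = (0,q)" "y = (0,q')" using xp yp True pp by blast+
    have m: "(q + n - r) mod n = (q' + n - r) mod n" using e unfolding x0 rot_zero prod.inject by (rule conjunct2)
    have "q = ((q + n - r) mod n + r) mod n" using rot_back[OF qn(1) assms] by simp
    also have "\<dots> = ((q' + n - r) mod n + r) mod n" using m by simp
    also have "\<dots> = q'" using rot_back[OF qn(2) assms] by simp
    finally show ?thesis using xp yp pp by simp
  next
    case False
    have "rot n r x = x" "rot n r y = y" using False xp yp pp by (simp_all add: rot_def)
    thus ?thesis using e by metis
  qed
qed

lemma psi_ES: assumes "r < n" "e \<in> EC" shows "psi n r e \<in> ES"
proof -
  consider (c) i where "i < n" "e = {(0,i),(0,(i+1) mod n)}"
    | (a) j where "j < length ls" "e = {(0,att j),(Suc j,1)}"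
    | (p) j t where "j<length ls" "1\<le>t" "t<ls!j" "e = {(Suc j,t),(Suc j,Suc t)}"
    using assms(2) unfolding edge_iff by blast
  thus ?thesis
  proof cases
    case c
    hence nm: "\<not> mixed e" by (auto simp: mixed_def)
    define i' where "i' = (i + n - r) mod n"
    have h1: "(i+1) mod n + n - r = (i+1) mod n + (n-r)" using assms(1) by simp
    have h2: "i + n - r = i + (n - r)" using assms(1) by simp
    have "((i+1) mod n + n - r) mod n = ((i+1) + (n-r)) mod n" unfolding h1 by (rule mod_add_left_eq)
    also have "(i+1) + (n-r) = (i + (n-r)) + 1" by simp
    also have "((i + (n - r)) + 1) mod n = (i' + 1) mod n" unfolding i'_def h2 by (rule mod_add_left_eq[symmetric])
    finally have "psi n r e = {(0,i'),(0,(i'+1) mod n)}"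
      using nm c unfolding psi_nm[OF nm] by (simp add: rot_zero i'_def)
    moreover have "i' < n" using n3 by (simp add: i'_def)
    ultimately show ?thesis unfolding edge_iff by blast
  next
    case a
    have "psi n r e = {(0,(\<lambda>_. 0::nat) j),(Suc j,1)}" unfolding a(2) psi_att by simp
    thus ?thesis unfolding edge_iff using a(1) by blast
  next
    case p
    hence nm: "\<not> mixed e" by (auto simp: mixed_def)
    have "psi n r e = e" unfolding psi_nm[OF nm] using p by simp
    thus ?thesis using p unfolding edge_iff by blast
  qed
qed

lemma psi_inj: assumes "r < n" shows "inj_on (psi n r) EC"
proof (rule inj_onI)
  fix e1 e2 assume e1: "e1 \<in> EC" and e2: "e2 \<in> EC" and eq: "psi n r e1 = psi n r e2"
  have m: "mixed e1 = mixed e2" using eq mixed_psi by metis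
  show "e1 = e2"
  proof (cases "mixed e1")
    case True
    then obtain j1 where j1: "e1 = {(0,att j1),(Suc j1,1)}" using mixed_E[OF e1] by blast
    obtain j2 where j2: "e2 = {(0,att j2),(Suc j2,1)}" using mixed_E[OF e2] m True by blast
    have "{(0,0),(Suc j1,1)} = {(0::nat,0::nat),(Suc j2,1)}" using eq unfolding j1 j2 psi_att .
    hence "j1 = j2" by (auto simp: doubleton_eq_iff)
    thus ?thesis using j1 j2 by simp
  next
    case False
    hence "rot n r ` e1 = rot n r ` e2" using eq m by (simp add: psi_nm)
    thus ?thesis using inj_on_image_eq_iff[OF rot_inj[OF assms]] edge_sub_V[OF e1] edge_sub_V[OF e2] attn
      by blast
  qed
qed


lemma reach_cyc:
  assumes FE: "F \<subseteq> EC" and con: "connected_sg T F" and r: "r < n" and rT: "(0,r) \<in> T"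
    and x: "x \<in> T" "fst x = 0"
  shows "(rot n r x, (0,0)) \<in> (adj (psi n r ` F))\<^sup>*"
proof -
  define pi where "pi y = (if fst y = 0 then y else (0, att (fst y - 1)))" for y :: "nat \<times> nat"
  have step: "(rot n r (pi a), rot n r (pi b)) \<in> (adj (psi n r ` F))\<^sup>*" if ab: "(a,b) \<in> adj F" for a b
  proof -
    have eF: "{a,b} \<in> F" using ab by (simp add: adj_iff)
    hence "{a,b} \<in> EC" using FE by blast
    then consider (c) i where "i < n" "{a,b} = {(0,i),(0,(i+1) mod n)}"
      | (a) j where "j < length ls" "{a,b} = {(0,att j),(Suc j,1)}"
      | (p) j t where "j<length ls" "1\<le>t" "t<ls!j" "{a,b} = {(Suc j,t),(Suc j,Suc t)}"
      unfolding edge_iff by blast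
    thus ?thesis
    proof cases
      case c
      have "a \<in> {(0,i),(0,(i+1) mod n)}" "b \<in> {(0,i),(0,(i+1) mod n)}" using c(2) by (metis insertI1 insert_commute)+
      hence f: "fst a = 0" "fst b = 0" by auto
      hence nm: "\<not> mixed {a,b}" unfolding mixed_def by auto
      have "psi n r {a,b} = {rot n r a, rot n r b}" using psi_nm[OF nm] by simp
      hence "{rot n r a, rot n r b} \<in> psi n r ` F" using eF by (metis image_eqI)
      moreover have "pi a = a" "pi b = b" using f by (simp_all add: pi_def)
      ultimately have "(rot n r (pi a), rot n r (pi b)) \<in> adj (psi n r ` F)" by (simp add: adj_iff)
      thus ?thesis by blast
    next
      case a
      have "a \<in> {(0,att j),(Suc j,1)}" "b \<in> {(0,att j),(Suc j,1)}" using a(2) by (metis insertI1 insert_commute)+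
      hence "pi a = (0, att j)" "pi b = (0, att j)" by (auto simp: pi_def)
      thus ?thesis by simp
    next
      case p
      have "a \<in> {(Suc j,t),(Suc j,Suc t)}" "b \<in> {(Suc j,t),(Suc j,Suc t)}" using p(4) by (metis insertI1 insert_commute)+
      hence "pi a = (0, att j)" "pi b = (0, att j)" by (auto simp: pi_def)
      thus ?thesis by simp
    qed
  qed
  have "(x,(0,r)) \<in> (adj F)\<^sup>*" using con x rT unfolding connected_sg_def by blast
  from map_rtrancl[OF this step] have "(rot n r (pi x), rot n r (pi (0,r))) \<in> (adj (psi n r ` F))\<^sup>*" .
  moreover have "pi x = x" "pi (0,r) = (0,r)" using x by (simp_all add: pi_def)
  ultimately show ?thesis using r by simp
qed

lemma reach_path:
  assumes TV: "T \<subseteq> V" and FE: "F \<subseteq> EC" and eT: "\<forall>e\<in>F. e \<subseteq> T" and con: "connected_sg T F"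
    and r: "r < n" and rT: "(0,r) \<in> T"
  shows "(Suc j,t) \<in> T \<Longrightarrow> ((Suc j,t),(0,0)) \<in> (adj (psi n r ` F))\<^sup>*"
proof (induction t rule: less_induct)
  case (less t)
  define U where "U = {y. fst y = Suc j \<and> snd y \<ge> t}"
  have t1: "t \<ge> 1" using less.prems TV by (auto simp: vert_iff)
  have "((Suc j,t),(0,r)) \<in> (adj F)\<^sup>*" using con less.prems rT unfolding connected_sg_def by blast
  from cut_lemma[OF this, of U] obtain a b where ab: "(a,b) \<in> adj F" "a \<in> U" "b \<notin> U"
    unfolding U_def by auto
  have aU: "fst a = Suc j" "snd a \<ge> t" using ab(2) by (auto simp: U_def)
  have ba: "b \<noteq> a" using ab by auto
  have eF: "{a,b} \<in> F" using ab by (simp add: adj_iff)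
  hence "{a,b} \<in> EC" using FE by blast
  then consider (c) i where "i < n" "{a,b} = {(0,i),(0,(i+1) mod n)}"
    | (a) j' where "j' < length ls" "{a,b} = {(0,att j'),(Suc j',1)}"
    | (p) j' t' where "j'<length ls" "1\<le>t'" "t'<ls!j'" "{a,b} = {(Suc j',t'),(Suc j',Suc t')}"
    unfolding edge_iff by blast
  thus ?case
  proof cases
    case c
    have "a \<in> {(0,i),(0,(i+1) mod n)}" using c(2) by (metis insertI1)
    thus ?thesis using aU by auto
  next
    case a
    have "a \<in> {(0,att j'),(Suc j',1)}" "b \<in> {(0,att j'),(Suc j',1)}" using a(2) by (metis insertI1 insert_commute)+
    hence a1: "a = (Suc j',1)" "b = (0, att j')" using aU ba by auto
    hence jj: "j' = j" "t = 1" using aU t1 by auto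
    have "psi n r {a,b} = {(Suc j,1),(0,0)}" unfolding a1 jj insert_commute[of "(Suc j,1)"] psi_att by (rule refl)
    hence "{(Suc j,1),(0,0)} \<in> psi n r ` F" using eF by (metis image_eqI)
    hence "((Suc j,t),(0,0)) \<in> adj (psi n r ` F)" using jj by (simp add: adj_iff)
    thus ?thesis by blast
  next
    case p
    have "a \<in> {(Suc j',t'),(Suc j',Suc t')}" "b \<in> {(Suc j',t'),(Suc j',Suc t')}" using p(4) by (metis insertI1 insert_commute)+
    hence "(a = (Suc j',t') \<and> b = (Suc j',Suc t')) \<or> (a = (Suc j',Suc t') \<and> b = (Suc j',t'))" using ba by auto
    moreover have "\<not> (a = (Suc j',t') \<and> b = (Suc j',Suc t'))"
    proof
      assume h: "a = (Suc j',t') \<and> b = (Suc j',Suc t')"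
      hence "b \<in> U" using aU by (auto simp: U_def)
      thus False using ab by blast
    qed
    ultimately have h: "a = (Suc j',Suc t')" "b = (Suc j',t')" by auto
    have jt: "j' = j" "t = Suc t'" using h aU ab(3) by (auto simp: U_def)
    have nm: "\<not> mixed {a,b}" unfolding mixed_def h by auto
    have "psi n r {a,b} = rot n r ` {a,b}" by (rule psi_nm[OF nm])
    also have "\<dots> = {a,b}" unfolding h by simp
    finally have "psi n r {a,b} = {a,b}" .
    hence "{a,b} \<in> psi n r ` F" using eF by (metis image_eqI)
    hence s1: "((Suc j,t),b) \<in> adj (psi n r ` F)" using h jt by (simp add: adj_iff)
    have "b \<in> T" using eF eT by blast
    hence "(b,(0,0)) \<in> (adj (psi n r ` F))\<^sup>*" using less.IH[of t'] jt h by simp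
    thus ?thesis using s1 by (meson converse_rtrancl_into_rtrancl)
  qed
qed


lemma acyc:
  assumes TV: "T \<subseteq> V" and FE: "F \<subseteq> EC" and eT: "\<forall>e\<in>F. e \<subseteq> T" and ac: "\<not> has_cycle T F"
    and r: "r < n"
  shows "\<not> has_cycle (rot n r ` T) (psi n r ` F)"
proof
  let ?F' = "psi n r ` F"
  have F'E: "?F' \<subseteq> ES" using psi_ES[OF r] FE by blast
  assume "has_cycle (rot n r ` T) ?F'"
  then obtain vs where vs: "length vs \<ge> 3" "distinct vs" "set vs \<subseteq> rot n r ` T"
    "\<forall>i. Suc i < length vs \<longrightarrow> {vs ! i, vs ! Suc i} \<in> ?F'" "{last vs, hd vs} \<in> ?F'"
    unfolding has_cycle_def by blast
  have zero: "\<forall>x\<in>set vs. fst x = 0"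
  proof (rule ccontr)
    assume "\<not> (\<forall>x\<in>set vs. fst x = 0)"
    then obtain x where x: "x \<in> set vs" "fst x \<noteq> 0" by blast
    obtain j t0 where xj: "x = (Suc j, t0)" using x(2) by (cases x; cases "fst x") auto
    define S where "S = {t. (Suc j,t) \<in> set vs}"
    have finS: "finite S" proof -
      have "S \<subseteq> snd ` set vs" unfolding S_def by force
      thus ?thesis using finite_subset by blast
    qed
    have "t0 \<in> S" using x xj by (simp add: S_def)
    hence neS: "S \<noteq> {}" by blast
    define M where "M = Max S"
    have MS: "M \<in> S" using Max_in[OF finS neS] by (simp add: M_def)
    have Mmax: "Suc M \<notin> S" using Max_ge[OF finS, of "Suc M"] by (auto simp: M_def)
    have "(Suc j, M) \<in> set vs" using MS by (simp add: S_def)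
    from cyc_nbrs[OF vs(1,2,4,5) this] obtain y z where yz: "y \<noteq> z" "y \<in> set vs" "z \<in> set vs"
      "{(Suc j,M),y} \<in> ?F'" "{(Suc j,M),z} \<in> ?F'" by blast
    have "y = (Suc j, Suc M) \<or> y = (if M = 1 then (0,0) else (Suc j, M - 1))"
      using nbr_S yz(4) F'E by blast
    moreover have "y \<noteq> (Suc j, Suc M)" using yz(2) Mmax by (auto simp: S_def)
    moreover have "z = (Suc j, Suc M) \<or> z = (if M = 1 then (0,0) else (Suc j, M - 1))"
      using nbr_S yz(5) F'E by blast
    moreover have "z \<noteq> (Suc j, Suc M)" using yz(3) Mmax by (auto simp: S_def)
    ultimately show False using yz(1) by argo
  qed
  define g where "g = inv_into T (rot n r)"
  have injT: "inj_on (rot n r) T" using rot_inj[OF r] TV by (rule inj_on_subset)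
  have bk: "{g u, g w} \<in> F" if uw: "{u,w} \<in> ?F'" "fst u = 0" "fst w = 0" for u w
  proof -
    obtain e where e: "e \<in> F" "psi n r e = {u,w}" using uw(1) by blast
    have "\<not> mixed {u,w}" unfolding mixed_def using uw by auto
    hence nm: "\<not> mixed e" using e(2) mixed_psi by metis
    hence "rot n r ` e = {u,w}" using e(2) psi_nm by metis
    hence "g ` {u,w} = e" unfolding g_def using inv_into_image_cancel[OF injT] eT e(1) by metis
    thus ?thesis using e(1) by simp
  qed
  define ws where "ws = map g vs"
  have ne: "vs \<noteq> []" using vs(1) by auto
  have "length ws \<ge> 3" using vs(1) by (simp add: ws_def)
  moreover have "distinct ws" unfolding ws_def distinct_map
    using vs(2,3) inj_on_inv_into[of "set vs" "rot n r" T] by (simp add: g_def)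
  moreover have "set ws \<subseteq> T"
  proof
    fix y assume "y \<in> set ws"
    then obtain x where "x \<in> set vs" "y = g x" unfolding ws_def by auto
    thus "y \<in> T" unfolding g_def using vs(3) inv_into_into by (metis subsetD)
  qed
  moreover have "\<forall>i. Suc i < length ws \<longrightarrow> {ws ! i, ws ! Suc i} \<in> F"
  proof (intro allI impI)
    fix i assume i: "Suc i < length ws"
    hence i': "Suc i < length vs" by (simp add: ws_def)
    have "vs!i \<in> set vs" "vs!Suc i \<in> set vs" using i' by simp_all
    hence "fst (vs!i) = 0" "fst (vs!Suc i) = 0" using zero by blast+
    hence "{g (vs!i), g (vs!Suc i)} \<in> F" using bk vs(4) i' by blast
    thus "{ws ! i, ws ! Suc i} \<in> F" using i' by (simp add: ws_def)
  qed
  moreover have "{last ws, hd ws} \<in> F"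
  proof -
    have "last vs \<in> set vs" "hd vs \<in> set vs" using ne by simp_all
    hence "fst (last vs) = 0" "fst (hd vs) = 0" using zero by blast+
    hence "{g (last vs), g (hd vs)} \<in> F" using bk vs(5) by blast
    thus ?thesis using ne by (simp add: ws_def last_map hd_map)
  qed
  ultimately have "has_cycle T F" unfolding has_cycle_def by blast
  thus False using ac by blast
qed

lemma main:
  assumes st: "is_subtree V EC T F" and r: "r < n" and rT: "(0,r) \<in> T"
  shows "is_subtree V ES (rot n r ` T) (psi n r ` F)"
proof -
  from st have TV: "T \<subseteq> V" and FE: "F \<subseteq> EC" and eT: "\<forall>e\<in>F. e \<subseteq> T" and ne: "T \<noteq> {}"
    and fin: "finite T" and con: "connected_sg T F" and ac: "\<not> has_cycle T F"
    unfolding is_subtree_def by auto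
  let ?T' = "rot n r ` T" and ?F' = "psi n r ` F"
  have T'V: "?T' \<subseteq> V" using rot_V TV by blast
  have F'E: "?F' \<subseteq> ES" using psi_ES[OF r] FE by blast
  have eT': "\<forall>e\<in>?F'. e \<subseteq> ?T'"
  proof
    fix e' assume "e' \<in> ?F'"
    then obtain e where e: "e \<in> F" "e' = psi n r e" by blast
    show "e' \<subseteq> ?T'"
    proof (cases "mixed e")
      case True
      then obtain j where j: "e = {(0,att j),(Suc j,1)}" using mixed_E FE e(1) by blast
      have "e' = {(0,0),(Suc j,1)}" unfolding e(2) j psi_att by (rule refl)
      moreover have "(0,0) \<in> ?T'" using rT r rot_0r by (metis image_eqI)
      moreover have "(Suc j,1) \<in> T" using eT e(1) j by blast
      hence "(Suc j,1) \<in> ?T'" using rot_Suc by (metis image_eqI)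
      ultimately show ?thesis by blast
    next
      case False
      hence "e' = rot n r ` e" using e(2) psi_nm by metis
      thus ?thesis using eT e(1) by blast
    qed
  qed
  have reach: "(x', (0,0)) \<in> (adj ?F')\<^sup>*" if x'T: "x' \<in> ?T'" for x'
  proof -
    obtain x where x: "x \<in> T" "x' = rot n r x" using x'T by blast
    show ?thesis
    proof (cases "fst x = 0")
      case True
      thus ?thesis using reach_cyc[OF FE con r rT x(1) True] x(2) by simp
    next
      case False
      then obtain j t where xj: "x = (Suc j,t)" by (cases x; cases "fst x") auto
      thus ?thesis using reach_path[OF TV FE eT con r rT] x by simp
    qed
  qed
  have "connected_sg ?T' ?F'" unfolding connected_sg_def
  proof (intro ballI)
    fix x y assume "x \<in> ?T'" "y \<in> ?T'"
    hence "(x,(0,0)) \<in> (adj ?F')\<^sup>*" "(y,(0,0)) \<in> (adj ?F')\<^sup>*" using reach by blast+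
    thus "(x,y) \<in> (adj ?F')\<^sup>*" using adj_rt_sym rtrancl_trans by metis
  qed
  moreover have "\<not> has_cycle ?T' ?F'" using acyc[OF TV FE eT ac r] .
  ultimately show ?thesis unfolding is_subtree_def using T'V F'E eT' ne fin by blast
qed


definition hasmix :: "(nat \<times> nat) set set \<Rightarrow> bool" where
  "hasmix F \<longleftrightarrow> (\<exists>e\<in>F. mixed e)"
definition rsel :: "(nat \<times> nat) set set \<Rightarrow> nat" where
  "rsel F = att (LEAST j. \<exists>e\<in>F. mixed e \<and> (Suc j,1) \<in> e)"

lemma hasmix_psi: "hasmix (psi n r ` F) = hasmix F"
  unfolding hasmix_def by simp

lemma rsel_psi: "rsel (psi n r ` F) = rsel F"
proof -
  have "(\<exists>e\<in>psi n r ` F. mixed e \<and> (Suc j,1) \<in> e) = (\<exists>e\<in>F. mixed e \<and> (Suc j,1) \<in> e)" for j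
  proof -
    have m: "(Suc j,1) \<in> psi n r e \<longleftrightarrow> (Suc j,1) \<in> e" for e
    proof -
      have "(Suc j,1) \<in> {x\<in>psi n r e. fst x \<noteq> 0} \<longleftrightarrow> (Suc j,1) \<in> {x\<in>e. fst x \<noteq> 0}"
        by (simp only: psi_nz)
      thus ?thesis by simp
    qed
    have "(\<exists>e\<in>psi n r ` F. mixed e \<and> (Suc j,1) \<in> e) = (\<exists>e\<in>F. mixed (psi n r e) \<and> (Suc j,1) \<in> psi n r e)"
      by blast
    thus ?thesis by (simp only: m mixed_psi)
  qed
  thus ?thesis unfolding rsel_def by simp
qed

lemma rsel_T: assumes st: "is_subtree V EC T F" and hm: "hasmix F"
  shows "rsel F < n \<and> (0, rsel F) \<in> T"
proof -
  from st have FE: "F \<subseteq> EC" and eT: "\<forall>e\<in>F. e \<subseteq> T" unfolding is_subtree_def by auto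
  define P where "P j \<longleftrightarrow> (\<exists>e\<in>F. mixed e \<and> (Suc j,1) \<in> e)" for j
  obtain e where e: "e \<in> F" "mixed e" using hm unfolding hasmix_def by blast
  then obtain j where "e = {(0,att j),(Suc j,1)}" using mixed_E FE by blast
  hence "P j" using e unfolding P_def by blast
  hence "P (LEAST j. P j)" by (rule LeastI)
  then obtain e0 where e0: "e0 \<in> F" "mixed e0" "(Suc (LEAST j. P j),1) \<in> e0" unfolding P_def by blast
  then obtain j' where j': "j' < length ls" "e0 = {(0,att j'),(Suc j',1)}" using mixed_E FE by blast
  hence "j' = (LEAST j. P j)" using e0(3) by auto
  hence "rsel F = att j'" unfolding rsel_def P_def by simp
  moreover have "(0, att j') \<in> T" using eT e0(1) j'(2) by blast
  ultimately show ?thesis using attn j'(1) by simp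
qed

lemma noattach: assumes st: "is_subtree V EC T F" and hm: "\<not> hasmix F"
  shows "is_subtree V ES T F"
proof -
  have "F \<subseteq> ES"
  proof
    fix e assume eF: "e \<in> F"
    hence eE: "e \<in> EC" using st unfolding is_subtree_def by blast
    have nm: "\<not> mixed e" using hm eF unfolding hasmix_def by blast
    show "e \<in> ES"
    proof (cases "\<exists>j<length ls. e = {(0,att j),(Suc j,1)}")
      case True
      hence "mixed e" unfolding mixed_def by force
      thus ?thesis using nm by blast
    next
      case False
      thus ?thesis using eE unfolding edge_iff by blast
    qed
  qed
  thus ?thesis using st unfolding is_subtree_def by blast
qed

lemma finV: "finite V"
proof -
  have "V \<subseteq> {..length ls} \<times> {..n + sum_list ls}"
  proof
    fix x assume x: "x \<in> V"
    obtain p q where xp: "x = (p,q)" by (cases x)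
    show "x \<in> {..length ls} \<times> {..n + sum_list ls}"
    proof (cases "p = 0")
      case True thus ?thesis using x xp by (simp add: vert_iff)
    next
      case False
      hence h: "p - 1 < length ls" "q \<le> ls!(p-1)" using x xp by (simp_all add: vert_iff)
      have "ls!(p-1) \<le> sum_list ls" using h(1) by (rule elem_le_sum_list)
      thus ?thesis using h xp by simp
    qed
  qed
  thus ?thesis using finite_subset by blast
qed

lemma finB: "finite {(T,F). is_subtree V ES T F \<and> P T}"
proof -
  have "ES \<subseteq> Pow V" using edge_sub_V[of _ "\<lambda>_. 0"] n3 by auto
  hence fE: "finite ES" using finV by (meson finite_Pow_iff finite_subset)
  have "{(T,F). is_subtree V ES T F \<and> P T} \<subseteq> Pow V \<times> Pow ES" unfolding is_subtree_def by auto
  thus ?thesis using finV fE by (meson finite_Pow_iff finite_SigmaI finite_subset)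
qed

lemma claim1: "card {(T,F). is_subtree V EC T F \<and> card T = k} \<le> card {(T,F). is_subtree V ES T F \<and> card T = k}"
proof -
  define phi where "phi p = (if hasmix (snd p) then (rot n (rsel (snd p)) ` fst p, psi n (rsel (snd p)) ` snd p) else p)"
    for p :: "(nat \<times> nat) set \<times> (nat \<times> nat) set set"
  let ?A = "{(T,F). is_subtree V EC T F \<and> card T = k}"
  let ?B = "{(T,F). is_subtree V ES T F \<and> card T = k}"
  have img: "phi ` ?A \<subseteq> ?B"
  proof
    fix p' assume "p' \<in> phi ` ?A"
    then obtain T F where TF: "is_subtree V EC T F" "card T = k" "p' = phi (T,F)" by auto
    show "p' \<in> ?B"
    proof (cases "hasmix F")
      case True
      have r: "rsel F < n" "(0, rsel F) \<in> T" using rsel_T[OF TF(1) True] by auto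
      have "inj_on (rot n (rsel F)) T" using rot_inj[OF r(1)] TF(1) unfolding is_subtree_def
        by (meson inj_on_subset)
      hence "card (rot n (rsel F) ` T) = k" using TF(2) by (simp add: card_image)
      thus ?thesis using main[OF TF(1) r] TF(3) True by (simp add: phi_def)
    next
      case False
      thus ?thesis using noattach[OF TF(1) False] TF by (simp add: phi_def)
    qed
  qed
  have inj: "inj_on phi ?A"
  proof (rule inj_onI)
    fix p1 p2 assume p1: "p1 \<in> ?A" and p2: "p2 \<in> ?A" and eq: "phi p1 = phi p2"
    obtain T1 F1 where t1: "p1 = (T1,F1)" "is_subtree V EC T1 F1" using p1 by auto
    obtain T2 F2 where t2: "p2 = (T2,F2)" "is_subtree V EC T2 F2" using p2 by auto
    have hm: "hasmix (snd (phi p)) = hasmix (snd p)" for p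
      unfolding phi_def by (simp add: hasmix_psi)
    have hmeq: "hasmix F1 = hasmix F2" using hm[of p1] hm[of p2] eq t1 t2 by simp
    show "p1 = p2"
    proof (cases "hasmix F1")
      case True
      hence True2: "hasmix F2" using hmeq by simp
      have e1: "phi p1 = (rot n (rsel F1) ` T1, psi n (rsel F1) ` F1)" using True t1 by (simp add: phi_def)
      have e2: "phi p2 = (rot n (rsel F2) ` T2, psi n (rsel F2) ` F2)" using True2 t2 by (simp add: phi_def)
      have "rsel F1 = rsel (psi n (rsel F1) ` F1)" by (simp add: rsel_psi)
      also have "\<dots> = rsel (psi n (rsel F2) ` F2)" using e1 e2 eq by simp
      also have "\<dots> = rsel F2" by (simp add: rsel_psi)
      finally have rr: "rsel F1 = rsel F2" .
      have r: "rsel F1 < n" using rsel_T[OF t1(2) True] by simp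
      have s1: "T1 \<subseteq> V" "F1 \<subseteq> EC" using t1(2) unfolding is_subtree_def by auto
      have s2: "T2 \<subseteq> V" "F2 \<subseteq> EC" using t2(2) unfolding is_subtree_def by auto
      have "rot n (rsel F1) ` T1 = rot n (rsel F1) ` T2" "psi n (rsel F1) ` F1 = psi n (rsel F1) ` F2"
        using e1 e2 eq rr by simp_all
      hence "T1 = T2" "F1 = F2"
        using inj_on_image_eq_iff[OF rot_inj[OF r] s1(1) s2(1)]
          inj_on_image_eq_iff[OF psi_inj[OF r] s1(2) s2(2)] by blast+
      thus ?thesis using t1 t2 by simp
    next
      case False
      hence "\<not> hasmix F2" using hmeq by simp
      thus ?thesis using False eq t1 t2 by (simp add: phi_def)
    qed
  qed
  show ?thesis using card_inj_on_le[OF inj img finB] .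
qed

lemma claim2: assumes i: "i < n"
  shows "card {(T,F). is_subtree V EC T F \<and> card T = k \<and> (0,i) \<in> T}
       \<le> card {(T,F). is_subtree V ES T F \<and> card T = k \<and> (0,0) \<in> T}"
proof -
  define rr where "rr F = (if hasmix F then rsel F else i)" for F
  define phi where "phi p = (rot n (rr (snd p)) ` fst p, psi n (rr (snd p)) ` snd p)"
    for p :: "(nat \<times> nat) set \<times> (nat \<times> nat) set set"
  let ?A = "{(T,F). is_subtree V EC T F \<and> card T = k \<and> (0,i) \<in> T}"
  let ?B = "{(T,F). is_subtree V ES T F \<and> card T = k \<and> (0,0) \<in> T}"
  have rrT: "rr F < n \<and> (0, rr F) \<in> T" if "is_subtree V EC T F" "(0,i) \<in> T" for T F
    using rsel_T[OF that(1)] that(2) i unfolding rr_def by auto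
  have img: "phi ` ?A \<subseteq> ?B"
  proof
    fix p' assume "p' \<in> phi ` ?A"
    then obtain T F where TF: "is_subtree V EC T F" "card T = k" "(0,i) \<in> T" "p' = phi (T,F)" by auto
    have r: "rr F < n" "(0, rr F) \<in> T" using rrT[OF TF(1,3)] by auto
    have "inj_on (rot n (rr F)) T" using rot_inj[OF r(1)] TF(1) unfolding is_subtree_def
      by (meson inj_on_subset)
    hence "card (rot n (rr F) ` T) = k" using TF(2) by (simp add: card_image)
    moreover have "(0,0) \<in> rot n (rr F) ` T" using r rot_0r by (metis image_eqI)
    ultimately show "p' \<in> ?B" using main[OF TF(1) r] TF(4) by (simp add: phi_def)
  qed
  have inj: "inj_on phi ?A"
  proof (rule inj_onI)
    fix p1 p2 assume p1: "p1 \<in> ?A" and p2: "p2 \<in> ?A" and eq: "phi p1 = phi p2"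
    obtain T1 F1 where t1: "p1 = (T1,F1)" "is_subtree V EC T1 F1" "(0,i) \<in> T1" using p1 by auto
    obtain T2 F2 where t2: "p2 = (T2,F2)" "is_subtree V EC T2 F2" "(0,i) \<in> T2" using p2 by auto
    have e1: "phi p1 = (rot n (rr F1) ` T1, psi n (rr F1) ` F1)" using t1 by (simp add: phi_def)
    have e2: "phi p2 = (rot n (rr F2) ` T2, psi n (rr F2) ` F2)" using t2 by (simp add: phi_def)
    have "hasmix F1 = hasmix (psi n (rr F1) ` F1)" by (simp add: hasmix_psi)
    also have "\<dots> = hasmix (psi n (rr F2) ` F2)" using e1 e2 eq by simp
    also have "\<dots> = hasmix F2" by (simp add: hasmix_psi)
    finally have hmeq: "hasmix F1 = hasmix F2" .
    have "rsel F1 = rsel (psi n (rr F1) ` F1)" by (simp add: rsel_psi)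
    also have "\<dots> = rsel (psi n (rr F2) ` F2)" using e1 e2 eq by simp
    also have "\<dots> = rsel F2" by (simp add: rsel_psi)
    finally have "rsel F1 = rsel F2" .
    hence rreq: "rr F1 = rr F2" using hmeq unfolding rr_def by simp
    have r: "rr F1 < n" using rrT[OF t1(2,3)] by simp
    have s1: "T1 \<subseteq> V" "F1 \<subseteq> EC" using t1(2) unfolding is_subtree_def by auto
    have s2: "T2 \<subseteq> V" "F2 \<subseteq> EC" using t2(2) unfolding is_subtree_def by auto
    have "rot n (rr F1) ` T1 = rot n (rr F1) ` T2" "psi n (rr F1) ` F1 = psi n (rr F1) ` F2"
      using e1 e2 eq rreq by simp_all
    hence "T1 = T2" "F1 = F2"
      using inj_on_image_eq_iff[OF rot_inj[OF r] s1(1) s2(1)]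
        inj_on_image_eq_iff[OF psi_inj[OF r] s1(2) s2(2)] by blast+
    thus "p1 = p2" using t1 t2 by simp
  qed
  have fin: "finite ?B" using finB[of "\<lambda>T. card T = k \<and> (0,0) \<in> T"] by (simp add: conj_assoc)
  show ?thesis using card_inj_on_le[OF inj img fin] .
qed

end

theorem lemma3:
  fixes n :: nat and ls :: "nat list" and att :: "nat \<Rightarrow> nat"
  assumes "n \<ge> 3"
    and "\<forall>l\<in>set ls. l > 0"
    and "\<forall>j < length ls. att j < n"
  shows "(\<forall>k. nk (cp_verts n ls) (cp_edges n ls att) k
               \<le> nk (cp_verts n ls) (cp_edges n ls (\<lambda>_. 0)) k)
       \<and> (\<forall>k. \<forall>i < n. nkv (cp_verts n ls) (cp_edges n ls att) (0, i) k
               \<le> nkv (cp_verts n ls) (cp_edges n ls (\<lambda>_. 0)) (0, 0) k)"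
proof -
  interpret cpl n ls att using assms by unfold_locales
  show ?thesis
  proof (intro conjI allI impI)
    fix k show "nk V EC k \<le> nk V ES k"
    proof (cases "k = 0")
      case True thus ?thesis by (simp add: nk_def)
    next
      case False
      show ?thesis unfolding nk_def if_not_P[OF False] by (rule claim1)
    qed
  next
    fix k i assume "i < n"
    thus "nkv V EC (0, i) k \<le> nkv V ES (0, 0) k"
      unfolding nkv_def by (rule claim2)
  qed
qed

end
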